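(* Run the algorithm Mark&Predict (described in the context) with cache size $k$, and consider one of its phases (the period from one unmarking of all pages to the next). Let $c$ be the number of new pages of this phase (distinct pages requested during the phase that were not in the cache at its start). Suppose that at the start of the phase the cache contains exactly $\eta_0$ pages whose most recent prediction is $0$ and which are incorrect (i.e., the page is not requested during this phase) and exactly $\eta_1$ pages whose most recent prediction is $1$ and which are incorrect (i.e., the page is requested during this phase). Then the expected number of page faults incurred by Mark&Predict during this phase is at most $c\,(H_{\eta_1+c}-H_c+1)+H_k\,\eta_0,$ where $H_m=\sum_{j=1}^m 1/j$ (and $H_0=0$).
   Context: Paging: there is a universe $U$ of pages and a cache holding at most $k$ pages, initially empty. Requests arrive online; if a requested page is not in the cache (a page fault), it must be loaded, evicting a cached page if the cache holds $k$ pages. Along with each request $r_i$ the algorithm receives a prediction bit $p_i\in\{0,1\}$. A page whose most recent prediction is $0$ (resp. $1$) is called a $0$-page (resp. $1$-page). Algorithm Mark&Predict: pages carry a mark. On request $r_i$: if $r_i$ is not in the cache and the cache is full, then (i) if all cached pages are marked, unmark all pages (start of a new phase); (ii) if there is an unmarked $1$-page in the cache, evict one chosen uniformly at random among unmarked $1$-pages, otherwise evict an unmarked $0$-page chosen uniformly at random; then load $r_i$. Finally (in all cases) mark $r_i$. The expectation is over the algorithm's random choices during the phase, given the cache content and predictions at the start of the phase. *)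

theory Defs
  imports "HOL-Probability.Probability"
begin

text \<open>State of Mark and Predict: (cache, marked pages, most recent prediction of each page).
  A prediction True means bit 1, False means bit 0.\<close>
type_synonym 'a mp_state = "'a set \<times> 'a set \<times> ('a \<Rightarrow> bool)"

definition mp_step :: "nat \<Rightarrow> 'a mp_state \<Rightarrow> 'a \<times> bool \<Rightarrow> ('a mp_state \<times> nat) pmf" where
  "mp_step k s rq =
     (case s of (cache, marked, pred) \<Rightarrow>
      (case rq of (r, b) \<Rightarrow>
        let pred' = pred(r := b) in
        if r \<in> cache then return_pmf ((cache, insert r marked, pred'), 0)
        else if card cache < k then return_pmf ((insert r cache, insert r marked, pred'), 1)
        else
          (let marked0 = (if cache \<subseteq> marked then {} else marked);
               U = cache - marked0;
               U1 = {q \<in> U. pred q};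
               V = (if U1 \<noteq> {} then U1 else U)
           in map_pmf (\<lambda>v. ((insert r (cache - {v}), insert r marked0, pred'), 1))
                (pmf_of_set V))))"

fun mp_faults :: "nat \<Rightarrow> 'a mp_state \<Rightarrow> ('a \<times> bool) list \<Rightarrow> nat pmf" where
  "mp_faults k s [] = return_pmf 0"
| "mp_faults k s (rq # rs) =
     bind_pmf (mp_step k s rq) (\<lambda>(s', f). map_pmf (\<lambda>n. f + n) (mp_faults k s' rs))"

end

theory Submission
  imports Defs
begin

definition F :: "nat \<Rightarrow> 'a mp_state \<Rightarrow> ('a \<times> bool) list \<Rightarrow> real" where
  "F k s rs = measure_pmf.expectation (mp_faults k s rs) real"

lemma mp_step_set: "set_pmf (mp_step k s rq) \<subseteq> {x. snd x \<le> 1}"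
  unfolding mp_step_def by (auto split: prod.splits simp: Let_def)

lemma mp_faults_set: "set_pmf (mp_faults k s rs) \<subseteq> {..length rs}"
proof (induction rs arbitrary: s)
  case Nil then show ?case by simp
next
  case (Cons rq rs)
  show ?case
  proof
    fix n assume "n \<in> set_pmf (mp_faults k s (rq # rs))"
    then have "n \<in> (\<Union>x\<in>set_pmf (mp_step k s rq). set_pmf ((\<lambda>(s', f). map_pmf (\<lambda>n. f + n) (mp_faults k s' rs)) x))"
      by (simp only: mp_faults.simps set_bind_pmf)
    then obtain x where x: "x \<in> set_pmf (mp_step k s rq)"
      and n: "n \<in> set_pmf ((\<lambda>(s', f). map_pmf (\<lambda>n. f + n) (mp_faults k s' rs)) x)"
      by (rule UN_E)
    obtain s' f where xe: "x = (s', f)" by (cases x)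
    from n have "n \<in> (\<lambda>n. f + n) ` set_pmf (mp_faults k s' rs)" by (simp add: xe)
    then obtain m where m: "m \<in> set_pmf (mp_faults k s' rs)" and nm: "n = f + m" by (rule imageE)
    have "snd x \<le> 1" using mp_step_set x by blast
    then have "f \<le> 1" by (simp add: xe)
    moreover have "m \<in> {..length rs}" using Cons.IH m by blast
    then have "m \<le> length rs" by simp
    moreover note nm
    ultimately show "n \<in> {..length (rq # rs)}" by simp
  qed
qed

lemma mp_faults_fin: "finite (set_pmf (mp_faults k s rs))"
  by (rule finite_subset[OF mp_faults_set]) simp

lemma F_ret:
  assumes "mp_step k s rq = return_pmf (s', f)"
  shows "F k s (rq # rs) = real f + F k s' rs"
proof -
  have "F k s (rq # rs) = measure_pmf.expectation (mp_faults k s' rs) (\<lambda>n. real f + real n)"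
    by (simp add: F_def assms bind_return_pmf)
  also have "\<dots> = real f + F k s' rs"
    unfolding F_def
    by (subst Bochner_Integration.integral_add) (auto intro!: integrable_measure_pmf_finite mp_faults_fin)
  finally show ?thesis .
qed

lemma F_evict:
  assumes "mp_step k s rq = map_pmf (\<lambda>v. (st v, 1)) (pmf_of_set V)" "finite V" "V \<noteq> {}"
  shows "F k s (rq # rs) = 1 + (\<Sum>v\<in>V. F k (st v) rs) / real (card V)"
proof -
  have "F k s (rq # rs) = measure_pmf.expectation
      (pmf_of_set V \<bind> (\<lambda>v. map_pmf (\<lambda>n. 1 + n) (mp_faults k (st v) rs))) real"
    by (simp add: F_def assms map_pmf_def bind_assoc_pmf bind_return_pmf)
  also have "\<dots> = (\<Sum>v\<in>V. measure_pmf.expectation (map_pmf (\<lambda>n. 1 + n) (mp_faults k (st v) rs)) real /\<^sub>R real (card V))"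
    using assms by (intro pmf_expectation_bind_pmf_of_set) (auto simp: mp_faults_fin)
  also have "\<dots> = (\<Sum>v\<in>V. (1 + F k (st v) rs) / real (card V))"
  proof (rule sum.cong)
    fix v
    have "measure_pmf.expectation (map_pmf (\<lambda>n. 1 + n) (mp_faults k (st v) rs)) real = 1 + F k (st v) rs"
      unfolding F_def
      by (simp, subst Bochner_Integration.integral_add) (auto intro!: integrable_measure_pmf_finite mp_faults_fin)
    then show "measure_pmf.expectation (map_pmf (\<lambda>n. 1 + n) (mp_faults k (st v) rs)) real /\<^sub>R real (card V) = (1 + F k (st v) rs) / real (card V)"
      by (simp add: divide_inverse)
  qed simp
  also have "\<dots> = 1 + (\<Sum>v\<in>V. F k (st v) rs) / real (card V)"
  proof -
    have c: "real (card V) > 0" using assms by (simp add: card_gt_0_iff)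
    have "(\<Sum>v\<in>V. (1 + F k (st v) rs) / real (card V)) = (\<Sum>v\<in>V. 1 / real (card V)) + (\<Sum>v\<in>V. F k (st v) rs / real (card V))"
      by (simp only: add_divide_distrib sum.distrib)
    also have "(\<Sum>v\<in>V. 1 / real (card V)) = 1" using c by simp
    also have "(\<Sum>v\<in>V. F k (st v) rs / real (card V)) = (\<Sum>v\<in>V. F k (st v) rs) / real (card V)"
      by (simp only: sum_divide_distrib)
    finally show ?thesis .
  qed
  finally show ?thesis .
qed

definition subs :: "'a set \<Rightarrow> nat \<Rightarrow> 'a set set" where
  "subs P a = {X. X \<subseteq> P \<and> card X = a}"

definition avg :: "'b set \<Rightarrow> ('b \<Rightarrow> real) \<Rightarrow> real" where
  "avg S f = (\<Sum>x\<in>S. f x) / real (card S)"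

lemma finite_subs: "finite P \<Longrightarrow> finite (subs P a)"
  unfolding subs_def by (rule finite_subset[of _ "Pow P"]) auto

lemma card_subs: "finite P \<Longrightarrow> card (subs P a) = card P choose a"
  unfolding subs_def by (rule n_subsets)

lemma double_count:
  assumes "finite P" "0 < a"
  shows "(\<Sum>X\<in>subs P a. \<Sum>v\<in>X. G (X - {v})) = (\<Sum>Y\<in>subs P (a-1). real (card P - (a-1)) * G Y)"
proof -
  let ?S = "Sigma (subs P (a-1)) (\<lambda>Y. P - Y)"
  let ?T = "Sigma (subs P a) (\<lambda>X. X)"
  let ?h = "\<lambda>(Y, v). (insert v Y, v)"
  have fs: "finite X" if "X \<in> subs P b" for X b using that assms(1) unfolding subs_def
    using finite_subset by blast
  have bij: "bij_betw ?h ?S ?T"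
  proof (rule bij_betw_byWitness[where f' = "\<lambda>(X, v). (X - {v}, v)"])
    show "\<forall>x\<in>?S. (\<lambda>(X, v). (X - {v}, v)) (?h x) = x" by (auto simp: subs_def)
    show "\<forall>y\<in>?T. ?h ((\<lambda>(X, v). (X - {v}, v)) y) = y" by (auto simp: insert_absorb)
    show "?h ` ?S \<subseteq> ?T"
    proof
      fix z assume "z \<in> ?h ` ?S"
      then obtain Y v where Y: "Y \<in> subs P (a-1)" "v \<in> P" "v \<notin> Y" and z: "z = (insert v Y, v)" by auto
      have "finite Y" using fs Y(1) by blast
      then have "card (insert v Y) = a" using Y assms(2) by (simp add: subs_def)
      then show "z \<in> ?T" using Y z by (auto simp: subs_def)
    qed
    show "(\<lambda>(X, v). (X - {v}, v)) ` ?T \<subseteq> ?S"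
    proof
      fix z assume "z \<in> (\<lambda>(X, v). (X - {v}, v)) ` ?T"
      then obtain X v where X: "X \<in> subs P a" "v \<in> X" and z: "z = (X - {v}, v)" by auto
      have "finite X" using fs X(1) by blast
      then have "card (X - {v}) = a - 1" using X by (simp add: subs_def)
      then show "z \<in> ?S" using X z by (auto simp: subs_def)
    qed
  qed
  have "(\<Sum>X\<in>subs P a. \<Sum>v\<in>X. G (X - {v})) = (\<Sum>z\<in>?T. G (fst z - {snd z}))"
    by (subst sum.Sigma) (auto simp: finite_subs assms fs split_beta)
  also have "\<dots> = (\<Sum>z\<in>?S. G (fst (?h z) - {snd (?h z)}))"
    by (rule sum.reindex_bij_betw[OF bij, symmetric])
  also have "\<dots> = (\<Sum>z\<in>?S. G (fst z))"
    by (rule sum.cong) (auto simp: split_beta)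
  also have "\<dots> = (\<Sum>Y\<in>subs P (a-1). \<Sum>v\<in>P - Y. G Y)"
    by (subst sum.Sigma) (auto simp: finite_subs assms split_beta)
  also have "\<dots> = (\<Sum>Y\<in>subs P (a-1). real (card P - (a-1)) * G Y)"
  proof (rule sum.cong)
    fix Y assume Y: "Y \<in> subs P (a-1)"
    then have "card (P - Y) = card P - (a-1)" using fs[OF Y] by (simp add: subs_def card_Diff_subset)
    then show "(\<Sum>v\<in>P - Y. G Y) = real (card P - (a-1)) * G Y" by simp
  qed simp
  finally show ?thesis .
qed

lemma avg_evict:
  assumes "finite P" "0 < a" "a \<le> card P"
  shows "avg (subs P a) (\<lambda>X. (\<Sum>v\<in>X. G (X - {v})) / real (card X)) = avg (subs P (a-1)) G"
proof -
  let ?p = "card P"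
  have "avg (subs P a) (\<lambda>X. (\<Sum>v\<in>X. G (X - {v})) / real (card X))
      = (\<Sum>X\<in>subs P a. (\<Sum>v\<in>X. G (X - {v})) / real a) / real (?p choose a)"
  proof -
    have "(\<Sum>X\<in>subs P a. (\<Sum>v\<in>X. G (X - {v})) / real (card X)) = (\<Sum>X\<in>subs P a. (\<Sum>v\<in>X. G (X - {v})) / real a)"
      by (rule sum.cong) (auto simp: subs_def)
    then show ?thesis by (simp add: avg_def card_subs assms(1))
  qed
  also have "\<dots> = (\<Sum>X\<in>subs P a. \<Sum>v\<in>X. G (X - {v})) / (real a * real (?p choose a))"
    by (simp add: sum_divide_distrib[symmetric])
  also have "\<dots> = (\<Sum>Y\<in>subs P (a-1). real (?p - (a-1)) * G Y) / (real a * real (?p choose a))"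
    by (simp add: double_count assms)
  also have "\<dots> = real (?p - (a-1)) * (\<Sum>Y\<in>subs P (a-1). G Y) / (real a * real (?p choose a))"
    by (simp add: sum_distrib_left)
  also have "real a * real (?p choose a) = real (?p - (a-1)) * real (?p choose (a-1))"
  proof -
    have "a * (?p choose a) = ?p * ((?p - 1) choose (a - 1))" using assms by (simp add: times_binomial_minus1_eq)
    also have "\<dots> = (?p - (a-1)) * (?p choose (a-1))" by (simp add: binomial_absorb_comp)
    finally show ?thesis by (metis of_nat_mult)
  qed
  also have "real (?p - (a-1)) * (\<Sum>Y\<in>subs P (a-1). G Y) / (real (?p - (a-1)) * real (?p choose (a-1)))
      = (\<Sum>Y\<in>subs P (a-1). G Y) / real (?p choose (a-1))"
    using assms by simp
  also have "\<dots> = avg (subs P (a-1)) G" unfolding avg_def by (simp add: card_subs assms)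
  finally show ?thesis .
qed

lemma frac_aux:
  fixes x c p c1 A :: real
  assumes "x * c = p * c1" "c > 0" "c1 > 0" "p > 0"
  shows "x / p * (A / c1) = A / c"
proof -
  have x0: "x \<noteq> 0" using assms by (metis mult_eq_0_iff less_irrefl)
  have "x / p * (A / c1) = (x * A) / (p * c1)" by simp
  also have "\<dots> = (x * A) / (x * c)" using assms(1) by simp
  also have "\<dots> = A / c" using x0 by simp
  finally show ?thesis .
qed

lemma avg_split:
  assumes "finite P" "q \<in> P" "0 < a" "a \<le> card P"
  shows "avg (subs P a) h = real a / real (card P) * avg (subs (P - {q}) (a-1)) (\<lambda>Y. h (insert q Y))
           + real (card P - a) / real (card P) * avg (subs (P - {q}) a) h"
proof -
  let ?p = "card P"
  have fP: "finite (P - {q})" using assms by simp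
  have split: "subs P a = insert q ` subs (P - {q}) (a-1) \<union> subs (P - {q}) a"
  proof (rule set_eqI, rule iffI)
    fix X assume X: "X \<in> subs P a"
    have fX: "finite X" using X assms(1) finite_subset unfolding subs_def by blast
    show "X \<in> insert q ` subs (P - {q}) (a-1) \<union> subs (P - {q}) a"
    proof (cases "q \<in> X")
      case True
      then have "X = insert q (X - {q})" by auto
      moreover have "X - {q} \<in> subs (P - {q}) (a-1)" using X True fX by (auto simp: subs_def)
      ultimately show ?thesis by blast
    next
      case False then show ?thesis using X by (auto simp: subs_def)
    qed
  next
    fix X assume X: "X \<in> insert q ` subs (P - {q}) (a-1) \<union> subs (P - {q}) a"
    then show "X \<in> subs P a"
    proof
      assume "X \<in> insert q ` subs (P - {q}) (a-1)"
      then obtain Y where Y: "Y \<in> subs (P - {q}) (a-1)" "X = insert q Y" by blast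
      have "finite Y" using Y fP finite_subset unfolding subs_def by blast
      moreover have "q \<notin> Y" using Y by (auto simp: subs_def)
      ultimately have "card (insert q Y) = a" using Y assms by (simp add: subs_def)
      then show ?thesis using Y assms by (auto simp: subs_def)
    next
      assume "X \<in> subs (P - {q}) a" then show ?thesis by (auto simp: subs_def)
    qed
  qed
  have disj: "insert q ` subs (P - {q}) (a-1) \<inter> subs (P - {q}) a = {}" by (auto simp: subs_def)
  have inj: "inj_on (insert q) (subs (P - {q}) (a-1))" 
    by (rule inj_onI) (auto simp: subs_def insert_ident)
  have sum_split: "(\<Sum>X\<in>subs P a. h X) = (\<Sum>Y\<in>subs (P - {q}) (a-1). h (insert q Y)) + (\<Sum>X\<in>subs (P - {q}) a. h X)"
  proof -
    have f1: "finite (insert q ` subs (P - {q}) (a-1))" using finite_subs[OF fP] by simp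
    have f2: "finite (subs (P - {q}) a)" using finite_subs[OF fP] by simp
    have "(\<Sum>X\<in>subs P a. h X) = (\<Sum>X\<in>insert q ` subs (P - {q}) (a-1). h X) + (\<Sum>X\<in>subs (P - {q}) a. h X)"
      unfolding split by (rule sum.union_disjoint[OF f1 f2 disj])
    also have "(\<Sum>X\<in>insert q ` subs (P - {q}) (a-1). h X) = (\<Sum>Y\<in>subs (P - {q}) (a-1). h (insert q Y))"
      by (rule sum.reindex[OF inj, unfolded comp_def])
    finally show ?thesis .
  qed
  have p1: "?p \<ge> 1" using assms by (simp add: Suc_le_eq card_gt_0_iff) blast
  have cP: "card (P - {q}) = ?p - 1" using assms by simp
  have b1: "real a * real (?p choose a) = real ?p * real ((?p - 1) choose (a - 1))"
    using times_binomial_minus1_eq[of a ?p] assms(3) by (simp flip: of_nat_mult)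
  have b2: "real (?p - a) * real (?p choose a) = real ?p * real ((?p - 1) choose a)"
    using binomial_absorb_comp[of ?p a] by (simp flip: of_nat_mult)
  have pos: "real (?p choose a) > 0" using assms by simp
  have pos1: "real ((?p - 1) choose (a - 1)) > 0" using assms by simp
  have pp: "real ?p > 0" using p1 by simp
  have t1: "real a / real ?p * (A / real ((?p - 1) choose (a - 1))) = A / real (?p choose a)" for A
    using frac_aux[OF b1 pos pos1 pp] .
  show ?thesis
  proof (cases "a = ?p")
    case True
    have z: "subs (P - {q}) a = {}"
    proof -
      have "X \<notin> subs (P - {q}) a" for X
      proof
        assume "X \<in> subs (P - {q}) a"
        then have "X \<subseteq> P - {q}" "card X = a" by (auto simp: subs_def)
        then have "a \<le> ?p - 1" using card_mono[OF fP] cP by metis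
        then show False using True p1 by simp
      qed
      then show ?thesis by blast
    qed
    have "avg (subs P a) h = (\<Sum>Y\<in>subs (P - {q}) (a-1). h (insert q Y)) / real (?p choose a)"
      unfolding avg_def by (simp add: sum_split z card_subs assms)
    also have "\<dots> = real a / real ?p * avg (subs (P - {q}) (a-1)) (\<lambda>Y. h (insert q Y))"
      unfolding avg_def card_subs[OF fP] cP by (simp only: t1)
    finally show ?thesis using True by simp
  next
    case False
    then have a_lt: "a < ?p" using assms by simp
    have pos2: "real ((?p - 1) choose a) > 0" using a_lt by simp
    have t2: "real (?p - a) / real ?p * (B / real ((?p - 1) choose a)) = B / real (?p choose a)" for B
      using frac_aux[OF b2 pos pos2 pp] .
    have "avg (subs P a) h = (\<Sum>Y\<in>subs (P - {q}) (a-1). h (insert q Y)) / real (?p choose a) + (\<Sum>X\<in>subs (P - {q}) a. h X) / real (?p choose a)"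
      unfolding avg_def by (simp add: sum_split card_subs assms add_divide_distrib)
    also have "\<dots> = real a / real ?p * ((\<Sum>Y\<in>subs (P - {q}) (a-1). h (insert q Y)) / real ((?p - 1) choose (a - 1)))
        + real (?p - a) / real ?p * ((\<Sum>X\<in>subs (P - {q}) a. h X) / real ((?p - 1) choose a))"
      by (simp only: t1 t2)
    finally show ?thesis unfolding avg_def card_subs[OF fP] cP .
  qed
qed

lemma avg_add_const:
  assumes "finite S" "S \<noteq> {}"
  shows "avg S (\<lambda>x. c + f x) = c + avg S f"
  proof -
  have c: "real (card S) > 0" using assms by (simp add: card_gt_0_iff)
  have "(\<Sum>x\<in>S. c + f x) = real (card S) * c + (\<Sum>x\<in>S. f x)" by (simp add: sum.distrib)
  then have "avg S (\<lambda>x. c + f x) = (real (card S) * c + (\<Sum>x\<in>S. f x)) / real (card S)" unfolding avg_def by simp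
  also have "\<dots> = c + (\<Sum>x\<in>S. f x) / real (card S)" using c by (simp add: add_divide_distrib)
  finally show ?thesis unfolding avg_def .
qed

lemma avg_cong: "(\<And>x. x \<in> S \<Longrightarrow> f x = g x) \<Longrightarrow> avg S f = avg S g"
  unfolding avg_def by simp

lemma harm_Suc_real: "(harm (Suc n) :: real) = harm n + 1 / real (Suc n)"
  by (simp add: harm_Suc divide_inverse)

lemma harm_diff_nonneg: "g \<le> p \<Longrightarrow> (harm g :: real) \<le> harm p"
  by (rule harm_mono)

lemma harm_diff_ge:
  assumes "g \<le> p"
  shows "real (p - g) \<le> real p * ((harm p :: real) - harm g)"
  using assms
proof (induction p rule: dec_induct)
  case base then show ?case by simp
next
  case (step n)
  have h0: "(harm g :: real) \<le> harm n" using step.hyps(1) by (rule harm_mono)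
  have "real (Suc n - g) = real (n - g) + 1" using step.hyps(1) by simp
  also have "\<dots> \<le> real n * (harm n - harm g) + 1" using step.IH by simp
  also have "\<dots> \<le> real (Suc n) * (harm n - harm g) + 1" using h0 by (simp add: mult_right_mono)
  also have "\<dots> = real (Suc n) * (harm (Suc n) - harm g)"
    by (simp add: harm_Suc_real algebra_simps)
  finally show ?case .
qed

lemma harm_shift_mono:
  assumes "B \<le> B'"
  shows "(harm (e + B') :: real) - harm B' \<le> harm (e + B) - harm B"
  using assms
proof (induction B' rule: dec_induct)
  case base then show ?case by simp
next
  case (step n)
  have "1 / real (Suc (e + n)) \<le> 1 / real (Suc n)"
    by (rule divide_left_mono) auto
  then have "(harm (e + Suc n) :: real) - harm (Suc n) \<le> harm (e + n) - harm n"
    by (simp add: harm_Suc_real)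
  then show ?case using step.IH by linarith
qed

lemma harm_xH:
  "real (B + x) * ((harm (B + x) :: real) - harm B) \<le> real x * harm x"
proof (induction x)
  case 0 then show ?case by simp
next
  case (Suc x)
  have m: "(harm (x + B) :: real) - harm B \<le> harm (x + 0) - harm 0"
    by (rule harm_shift_mono) simp
  have "real (B + Suc x) * ((harm (B + Suc x) :: real) - harm B)
      = real (B + x) * (harm (B + x) - harm B) + (harm (B + x) - harm B) + 1"
    by (simp add: harm_Suc_real algebra_simps)
  also have "\<dots> \<le> real x * harm x + harm x + 1"
    using Suc.IH m by (simp add: add.commute harm_def)
  also have "\<dots> = real (Suc x) * harm (Suc x)"
    by (simp add: harm_Suc_real algebra_simps)
  finally show ?case .
qed

lemma xH_mono: "x \<le> y \<Longrightarrow> real x * (harm x :: real) \<le> real y * harm y"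
  by (intro mult_mono harm_mono) (auto simp: harm_nonneg)

lemma final_ineq:
  fixes c e1 B1 e0 p0 k :: nat
  assumes "c \<le> B1 + e0" "p0 \<le> k" "e0 \<le> p0"
  shows "real c + real c * ((harm (e1 + B1) :: real) - harm B1) + real e0 * (harm p0 - harm e0)
     \<le> real c * (harm (e1 + c) - harm c + 1) + harm k * real e0"
proof -
  have key: "real c * ((harm (e1 + B1) :: real) - harm B1) \<le> real c * (harm (e1 + c) - harm c) + real e0 * harm e0"
  proof (cases "c \<le> B1")
    case True
    have "(harm (e1 + B1) :: real) - harm B1 \<le> harm (e1 + c) - harm c"
      by (rule harm_shift_mono[OF True])
    then have "real c * ((harm (e1 + B1) :: real) - harm B1) \<le> real c * (harm (e1 + c) - harm c)"
      by (simp add: mult_left_mono)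
    moreover have "0 \<le> real e0 * (harm e0 :: real)" by (simp add: harm_nonneg)
    ultimately show ?thesis by linarith
  next
    case False
    define x where "x = c - B1"
    have cx: "c = B1 + x" using False x_def by simp
    have h1: "(harm (e1 + B1) :: real) \<le> harm (e1 + c)" using False by (intro harm_mono) simp
    have "real c * ((harm (e1 + B1) :: real) - harm B1) \<le> real c * ((harm (e1 + c) - harm c) + (harm c - harm B1))"
      using h1 by (intro mult_left_mono) auto
    also have "\<dots> = real c * (harm (e1 + c) - harm c) + real (B1 + x) * (harm (B1 + x) - harm B1)"
      by (simp add: cx algebra_simps)
    also have "\<dots> \<le> real c * (harm (e1 + c) - harm c) + real x * harm x"
      using harm_xH[of B1 x] by simp
    also have "\<dots> \<le> real c * (harm (e1 + c) - harm c) + real e0 * harm e0"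
      using xH_mono[of x e0] assms(1) x_def by simp
    finally show ?thesis .
  qed
  have "real e0 * (harm e0 :: real) + real e0 * (harm p0 - harm e0) = real e0 * harm p0"
    by (simp add: algebra_simps)
  also have "\<dots> \<le> real e0 * harm k" using assms(2) by (intro mult_left_mono harm_mono) auto
  finally have "real e0 * (harm e0 :: real) + real e0 * (harm p0 - harm e0) \<le> harm k * real e0"
    by (simp add: mult.commute)
  then show ?thesis using key by (simp add: algebra_simps)
qed

lemma F_nil: "F k s [] = 0"
  by (simp add: F_def)

lemma F_hit:
  assumes "r \<in> cache"
  shows "F k (cache, marked, pred) ((r, bt) # rs) = F k (cache, insert r marked, pred(r := bt)) rs"
proof -
  have "mp_step k (cache, marked, pred) (r, bt) = return_pmf ((cache, insert r marked, pred(r := bt)), 0)"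
    using assms by (simp add: mp_step_def)
  from F_ret[OF this] show ?thesis by simp
qed

lemma F_miss:
  assumes "r \<notin> cache" "card cache = k" "\<not> cache \<subseteq> marked"
    and "V = (if {q \<in> cache - marked. pred q} \<noteq> {} then {q \<in> cache - marked. pred q} else cache - marked)"
    and "finite V" "V \<noteq> {}"
  shows "F k (cache, marked, pred) ((r, bt) # rs)
     = 1 + (\<Sum>v\<in>V. F k (insert r (cache - {v}), insert r marked, pred(r := bt)) rs) / real (card V)"
proof -
  have "mp_step k (cache, marked, pred) (r, bt)
     = map_pmf (\<lambda>v. ((insert r (cache - {v}), insert r marked, pred(r := bt)), 1)) (pmf_of_set V)"
  proof (cases "{q \<in> cache - marked. pred q} \<noteq> {}")
    case True
    then have "V = {q \<in> cache - marked. pred q}" using assms(4) by simp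
    then show ?thesis using assms(1-3) True unfolding mp_step_def Let_def by simp
  next
    case False
    then have "V = cache - marked" using assms(4) by simp
    then show ?thesis using assms(1-3) False unfolding mp_step_def Let_def by auto
  qed
  from F_evict[OF this assms(5,6)] show ?thesis .
qed

lemma F_reset:
  assumes "r \<notin> cache" "card cache = k" "cache \<subseteq> marked"
    and "V = (if {q \<in> cache. pred q} \<noteq> {} then {q \<in> cache. pred q} else cache)"
    and "finite V" "V \<noteq> {}"
  shows "F k (cache, marked, pred) ((r, bt) # rs)
     = 1 + (\<Sum>v\<in>V. F k (insert r (cache - {v}), {r}, pred(r := bt)) rs) / real (card V)"
proof -
  have "mp_step k (cache, marked, pred) (r, bt)
     = map_pmf (\<lambda>v. ((insert r (cache - {v}), {r}, pred(r := bt)), 1)) (pmf_of_set V)"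
  proof (cases "{q \<in> cache. pred q} \<noteq> {}")
    case True
    then have "V = {q \<in> cache. pred q}" using assms(4) by simp
    then show ?thesis using assms(1-3) True unfolding mp_step_def Let_def by simp
  next
    case False
    then have "V = cache" using assms(4) by simp
    then show ?thesis using assms(1-3) False unfolding mp_step_def Let_def by auto
  qed
  from F_evict[OF this assms(5,6)] show ?thesis .
qed

lemma reg0:
  assumes "finite M" "finite P0" "M \<inter> P0 = {}" "\<forall>q\<in>P0. \<not> pred q"
    "b \<le> card P0" "card M + b = k" "card (M \<union> fst ` set rs) \<le> k"
  shows "avg (subs P0 b) (\<lambda>X. F k (M \<union> X, M, pred) rs)
     \<le> real (card (fst ` set rs - M - P0)) + real (card (P0 - fst ` set rs)) * (harm (card P0) - harm (card (P0 - fst ` set rs)))"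
  using assms
proof (induction rs arbitrary: M P0 pred b)
  case Nil
  have "avg (subs P0 b) (\<lambda>X. F k (M \<union> X, M, pred) []) = 0" by (simp add: avg_def F_nil)
  then show ?case by simp
next
  case (Cons rq rs)
  obtain r bt where rq: "rq = (r, bt)" by (cases rq)
  define R where "R = fst ` set rs"
  have RR: "fst ` set (rq # rs) = insert r R" by (simp add: rq R_def)
  have finR: "finite R" unfolding R_def by simp
  define M' where "M' = insert r M"
  define pred' where "pred' = pred(r := bt)"
  note prems = Cons.prems
  have fX: "finite X" if "X \<subseteq> P0" for X using that prems(2) finite_subset by blast
  have cardMX: "card (M \<union> X) = card M + card X" if "X \<subseteq> P0" for X
    using card_Un_disjoint[OF prems(1) fX[OF that]] prems(3) that by blast
  have cardk: "card (M \<union> insert r R) \<le> k" using prems(7) unfolding RR .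
  show ?case
  proof (cases "r \<in> M")
    case True
    have rP: "r \<notin> P0" using True prems(3) by blast
    have "avg (subs P0 b) (\<lambda>X. F k (M \<union> X, M, pred) (rq # rs)) = avg (subs P0 b) (\<lambda>X. F k (M \<union> X, M, pred') rs)"
      by (rule avg_cong) (simp add: rq F_hit True insert_absorb pred'_def)
    also have "\<dots> \<le> real (card (R - M - P0)) + real (card (P0 - R)) * (harm (card P0) - harm (card (P0 - R)))"
      unfolding R_def
    proof (rule Cons.IH)
      show "\<forall>q\<in>P0. \<not> pred' q" using prems(4) rP by (simp add: pred'_def)
      have "card (M \<union> R) \<le> card (M \<union> insert r R)" by (rule card_mono) (auto simp: prems(1) finR)
      then show "card (M \<union> fst ` set rs) \<le> k" using cardk R_def by simp
    qed (use prems in auto)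
    also have "R - M - P0 = insert r R - M - P0" using True by auto
    also have "P0 - R = P0 - insert r R" using rP by auto
    finally show ?thesis using RR by simp
  next
    case notM: False
    have b1: "b \<ge> 1"
    proof -
      have "card (insert r M) \<le> card (M \<union> insert r R)" by (rule card_mono) (auto simp: prems(1) finR)
      then show ?thesis using notM prems(1,6) cardk by simp
    qed
    have miss: "F k (M \<union> X, M, pred) (rq # rs) = 1 + (\<Sum>v\<in>X. F k (M' \<union> (X - {v}), M', pred') rs) / real (card X)"
      if X: "X \<subseteq> P0" "card X = b" "r \<notin> X" for X
    proof -
      have fin: "finite X" using fX X by blast
      have ne: "X \<noteq> {}" using X b1 by auto
      have dM: "M \<union> X - M = X" using X prems(3) by blast
      have np: "{q \<in> M \<union> X - M. pred q} = {}" using dM X prems(4) by auto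
      have V: "X = (if {q \<in> M \<union> X - M. pred q} \<noteq> {} then {q \<in> M \<union> X - M. pred q} else M \<union> X - M)"
        using np dM by simp
      have "F k (M \<union> X, M, pred) ((r, bt) # rs) = 1 + (\<Sum>v\<in>X. F k (insert r (M \<union> X - {v}), insert r M, pred(r := bt)) rs) / real (card X)"
      proof (rule F_miss[OF _ _ _ V fin ne])
        show "r \<notin> M \<union> X" using notM X by blast
        show "card (M \<union> X) = k" using cardMX[OF X(1)] X prems(6) by simp
        show "\<not> M \<union> X \<subseteq> M" using ne dM by blast
      qed
      also have "(\<Sum>v\<in>X. F k (insert r (M \<union> X - {v}), insert r M, pred(r := bt)) rs) = (\<Sum>v\<in>X. F k (M' \<union> (X - {v}), M', pred') rs)"
      proof (rule sum.cong)
        fix v assume "v \<in> X"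
        then have "insert r (M \<union> X - {v}) = M' \<union> (X - {v})" using X prems(3) by (auto simp: M'_def)
        then show "F k (insert r (M \<union> X - {v}), insert r M, pred(r := bt)) rs = F k (M' \<union> (X - {v}), M', pred') rs"
          by (simp add: M'_def pred'_def)
      qed simp
      finally show ?thesis by (simp add: rq)
    qed
    define G where "G Y = F k (M' \<union> Y, M', pred') rs" for Y
    show ?thesis
    proof (cases "r \<in> P0")
      case inP: True
      define P' where "P' = P0 - {r}"
      define p where "p = card P0"
      have fP': "finite P'" using prems(2) P'_def by simp
      have cP': "card P' = p - 1" using inP prems(2) by (simp add: P'_def p_def)
      have p1: "p \<ge> 1"
      proof -
        have "p > 0" unfolding p_def using inP prems(2) card_gt_0_iff by blast
        then show ?thesis by simp
      qed
      let ?h = "\<lambda>X. F k (M \<union> X, M, pred) (rq # rs)"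
      define A where "A = avg (subs P' (b-1)) G"
      have t1: "avg (subs P' (b-1)) (\<lambda>Y. ?h (insert r Y)) = A"
        unfolding A_def
      proof (rule avg_cong)
        fix Y assume "Y \<in> subs P' (b - 1)"
        have "M \<union> insert r Y = M' \<union> Y" by (auto simp: M'_def)
        then show "?h (insert r Y) = G Y" by (simp add: rq F_hit G_def M'_def pred'_def)
      qed
      have t2: "real (p - b) / real p * avg (subs P' b) ?h = real (p - b) / real p * (1 + A)"
      proof (cases "b < p")
        case True
        have ne: "subs P' b \<noteq> {}"
        proof -
          have "b \<le> card P'" using True cP' by simp
          then obtain X where "X \<subseteq> P'" "card X = b" by (rule obtain_subset_with_card_n)
          then show ?thesis by (auto simp: subs_def)
        qed
        have "avg (subs P' b) ?h = avg (subs P' b) (\<lambda>X. 1 + (\<Sum>v\<in>X. G (X - {v})) / real (card X))"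
        proof (rule avg_cong)
          fix X assume "X \<in> subs P' b"
          then have "X \<subseteq> P0" "card X = b" "r \<notin> X" by (auto simp: subs_def P'_def)
          then show "?h X = 1 + (\<Sum>v\<in>X. G (X - {v})) / real (card X)" by (simp add: miss G_def)
        qed
        also have "\<dots> = 1 + avg (subs P' b) (\<lambda>X. (\<Sum>v\<in>X. G (X - {v})) / real (card X))"
          by (rule avg_add_const[OF finite_subs[OF fP'] ne])
        also have "\<dots> = 1 + A" unfolding A_def using b1 True cP' by (subst avg_evict[OF fP']) auto
        finally show ?thesis by simp
      next
        case False
        then show ?thesis using prems(5) p_def by simp
      qed
      have "avg (subs P0 b) ?h = real b / real p * A + real (p - b) / real p * (1 + A)"
        using avg_split[OF prems(2) inP, of b ?h] b1 prems(5) t1 t2 by (simp add: p_def P'_def)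
      also have "\<dots> = real (p - b) / real p + A"
      proof -
        have "real p > 0" using p1 by simp
        moreover have "real (p - b) = real p - real b" using prems(5) p_def by simp
        ultimately show ?thesis by (simp add: field_simps)
      qed
      finally have eqA: "avg (subs P0 b) ?h = real (p - b) / real p + A" .
      have IHA: "A \<le> real (card (R - M' - P')) + real (card (P' - R)) * (harm (card P') - harm (card (P' - R)))"
        unfolding A_def G_def R_def
      proof (rule Cons.IH)
        show "finite M'" using prems(1) M'_def by simp
        show "finite P'" by (rule fP')
        show "M' \<inter> P' = {}" using prems(3) by (auto simp: M'_def P'_def)
        show "\<forall>q\<in>P'. \<not> pred' q" using prems(4) by (simp add: pred'_def P'_def)
        show "b - 1 \<le> card P'" using cP' prems(5) p_def by simp
        show "card M' + (b - 1) = k" using prems(1,6) notM b1 M'_def by simp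
        have "M' \<union> R = M \<union> insert r R" by (auto simp: M'_def)
        then show "card (M' \<union> fst ` set rs) \<le> k" using cardk R_def by simp
      qed
      have s1: "R - M' - P' = insert r R - M - P0" using inP by (auto simp: M'_def P'_def)
      have s2: "P' - R = P0 - insert r R" using inP by (auto simp: P'_def)
      have main: "avg (subs P0 b) ?h \<le> real (p - b) / real p + real (card (insert r R - M - P0))
          + real (card (P0 - insert r R)) * (harm (p - 1) - harm (card (P0 - insert r R)))"
        using eqA IHA unfolding s1 s2 cP' by simp
      define g where "g = card (P0 - insert r R)"
      have pbg: "p - b \<le> g"
      proof -
        have "card M + card (P0 \<inter> insert r R) = card (M \<union> (P0 \<inter> insert r R))"
          using prems(1,2,3) by (subst card_Un_disjoint) auto
        also have "\<dots> \<le> card (M \<union> insert r R)" by (rule card_mono) (auto simp: prems(1) finR)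
        finally have "card (P0 \<inter> insert r R) \<le> b" using cardk prems(6) by simp
        moreover have "p = card (P0 \<inter> insert r R) + g" unfolding p_def g_def by (rule card_Int_Diff[OF prems(2)])
        ultimately show ?thesis by simp
      qed
      have hp: "(harm p :: real) = harm (p - 1) + 1 / real p"
        using p1 harm_Suc_real[of "p - 1"] by simp
      have "real (p - b) / real p \<le> real g / real p" using pbg by (simp add: divide_right_mono)
      then have "real (p - b) / real p + real g * (harm (p - 1) - harm g) \<le> real g * (harm p - harm g)"
        by (simp add: hp algebra_simps)
      then show ?thesis using main RR by (simp add: g_def p_def)
    next
      case notP: False
      have ne: "subs P0 b \<noteq> {}"
      proof -
        obtain X where "X \<subseteq> P0" "card X = b" using prems(5) by (rule obtain_subset_with_card_n)
        then show ?thesis by (auto simp: subs_def)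
      qed
      have "avg (subs P0 b) (\<lambda>X. F k (M \<union> X, M, pred) (rq # rs)) = avg (subs P0 b) (\<lambda>X. 1 + (\<Sum>v\<in>X. G (X - {v})) / real (card X))"
      proof (rule avg_cong)
        fix X assume "X \<in> subs P0 b"
        then have "X \<subseteq> P0" "card X = b" "r \<notin> X" using notP by (auto simp: subs_def)
        then show "F k (M \<union> X, M, pred) (rq # rs) = 1 + (\<Sum>v\<in>X. G (X - {v})) / real (card X)" by (simp add: miss G_def)
      qed
      also have "\<dots> = 1 + avg (subs P0 b) (\<lambda>X. (\<Sum>v\<in>X. G (X - {v})) / real (card X))"
        by (rule avg_add_const[OF finite_subs[OF prems(2)] ne])
      also have "\<dots> = 1 + avg (subs P0 (b - 1)) G" using b1 prems(5) by (subst avg_evict[OF prems(2)]) auto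
      finally have eqA: "avg (subs P0 b) (\<lambda>X. F k (M \<union> X, M, pred) (rq # rs)) = 1 + avg (subs P0 (b - 1)) G" .
      have IHA: "avg (subs P0 (b - 1)) G \<le> real (card (R - M' - P0)) + real (card (P0 - R)) * (harm (card P0) - harm (card (P0 - R)))"
        unfolding G_def R_def
      proof (rule Cons.IH)
        show "finite M'" using prems(1) M'_def by simp
        show "M' \<inter> P0 = {}" using prems(3) notP by (auto simp: M'_def)
        show "\<forall>q\<in>P0. \<not> pred' q" using prems(4) notP by (simp add: pred'_def)
        show "card M' + (b - 1) = k" using prems(1,6) notM b1 M'_def by simp
        have "M' \<union> R = M \<union> insert r R" by (auto simp: M'_def)
        then show "card (M' \<union> fst ` set rs) \<le> k" using cardk R_def by simp
      qed (use prems in auto)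
      have s2: "P0 - R = P0 - insert r R" using notP by auto
      have main: "avg (subs P0 b) (\<lambda>X. F k (M \<union> X, M, pred) (rq # rs)) \<le> 1 + (real (card (R - M' - P0)) +
          real (card (P0 - insert r R)) * (harm (card P0) - harm (card (P0 - insert r R))))"
        using eqA IHA unfolding s2 by simp
      have cc: "card (R - M' - P0) + 1 = card (insert r R - M - P0)"
      proof -
        have "insert r R - M - P0 = insert r (R - M' - P0)" using notM notP by (auto simp: M'_def)
        moreover have "r \<notin> R - M' - P0" by (simp add: M'_def)
        ultimately show ?thesis using finR by simp
      qed
      have "real (card (insert r R - M - P0)) = 1 + real (card (R - M' - P0))"
        using cc by (metis of_nat_Suc Suc_eq_plus1 add.commute)
      then show ?thesis using main RR by simp
    qed
  qed
qed

lemma subs_zero: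
  assumes "finite P" shows "subs P 0 = {{}}"
proof -
  have "X = {}" if "X \<subseteq> P" "card X = 0" for X
  proof -
    have "finite X" using that(1) assms by (rule finite_subset)
    then show ?thesis using that(2) by simp
  qed
  then show ?thesis unfolding subs_def by auto
qed

lemma subs_full: "finite P \<Longrightarrow> subs P (card P) = {P}"
  unfolding subs_def using card_subset_eq by blast

lemma avg_single: "avg {x} f = f x"
  unfolding avg_def by simp

lemma reg1_zero:
  assumes "finite M" "finite P1" "finite P0" "M \<inter> P1 = {}" "M \<inter> P0 = {}" "P1 \<inter> P0 = {}"
    "\<forall>q\<in>P0. \<not> pred q" "card M + card P0 = k" "card (M \<union> fst ` set rs) \<le> k"
  shows "avg (subs P1 0) (\<lambda>X. F k (M \<union> P0 \<union> X, M, pred) rs)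
     \<le> real (card (fst ` set rs - M - P1 - P0)) + real (card (fst ` set rs - M - P1 - P0) + (card P1 - 0)) * (harm (card P1) - harm (card (P1 - fst ` set rs)))
       + real (card (P0 - fst ` set rs)) * (harm (card P0) - harm (card (P0 - fst ` set rs)))"
proof -
  define R where "R = fst ` set rs"
  have finR: "finite R" unfolding R_def by simp
  define n where "n = card (R - M - P1 - P0)"
  define p where "p = card P1"
  define g where "g = card (P1 - R)"
  have "avg (subs P1 0) (\<lambda>X. F k (M \<union> P0 \<union> X, M, pred) rs) = F k (M \<union> P0, M, pred) rs"
    by (simp add: subs_zero assms(2) avg_single)
  also have "\<dots> = avg (subs P0 (card P0)) (\<lambda>X. F k (M \<union> X, M, pred) rs)"
    by (simp add: subs_full assms(3) avg_single)
  also have "\<dots> \<le> real (card (R - M - P0)) + real (card (P0 - R)) * (harm (card P0) - harm (card (P0 - R)))"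
    unfolding R_def by (rule reg0) (use assms in auto)
  also have "card (R - M - P0) = n + card (P1 \<inter> R)"
  proof -
    have "R - M - P0 = (R - M - P1 - P0) \<union> (P1 \<inter> R)" using assms(4,6) by auto
    moreover have "(R - M - P1 - P0) \<inter> (P1 \<inter> R) = {}" by auto
    ultimately show ?thesis unfolding n_def using finR by (simp add: card_Un_disjoint)
  qed
  finally have main: "avg (subs P1 0) (\<lambda>X. F k (M \<union> P0 \<union> X, M, pred) rs)
     \<le> real n + real (card (P1 \<inter> R)) + real (card (P0 - R)) * (harm (card P0) - harm (card (P0 - R)))" by simp
  have pg: "card (P1 \<inter> R) = p - g" unfolding p_def g_def using card_Int_Diff[OF assms(2), of R] by simp
  have gp: "g \<le> p" unfolding p_def g_def using assms(2) by (intro card_mono) auto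
  have h0: "(harm g :: real) \<le> harm p" using gp by (rule harm_mono)
  have "real (p - g) \<le> real p * (harm p - harm g)" by (rule harm_diff_ge[OF gp])
  also have "\<dots> \<le> real (n + p) * (harm p - harm g)" using h0 by (intro mult_right_mono) auto
  finally have "real (card (P1 \<inter> R)) \<le> real (n + (p - 0)) * (harm p - harm g)" using pg by simp
  then show ?thesis using main unfolding R_def n_def p_def g_def by simp
qed

lemma reg1:
  assumes "finite M" "finite P1" "finite P0" "M \<inter> P1 = {}" "M \<inter> P0 = {}" "P1 \<inter> P0 = {}"
    "\<forall>q\<in>P1. pred q" "\<forall>q\<in>P0. \<not> pred q" "a \<le> card P1" "card M + a + card P0 = k"
    "card (M \<union> fst ` set rs) \<le> k"
  shows "avg (subs P1 a) (\<lambda>X. F k (M \<union> P0 \<union> X, M, pred) rs)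
     \<le> real (card (fst ` set rs - M - P1 - P0)) + real (card (fst ` set rs - M - P1 - P0) + (card P1 - a)) * (harm (card P1) - harm (card (P1 - fst ` set rs)))
       + real (card (P0 - fst ` set rs)) * (harm (card P0) - harm (card (P0 - fst ` set rs)))"
  using assms
proof (induction rs arbitrary: M P1 P0 pred a)
  case Nil
  have "avg (subs P1 a) (\<lambda>X. F k (M \<union> P0 \<union> X, M, pred) []) = 0" by (simp add: avg_def F_nil)
  then show ?case by simp
next
  case (Cons rq rs)
  note prems = Cons.prems
  show ?case
  proof (cases "a = 0")
    case True
    then show ?thesis using reg1_zero[of M P1 P0 pred k "rq # rs"] prems by simp
  next
    case a0: False
    obtain r bt where rq: "rq = (r, bt)" by (cases rq)
    define R where "R = fst ` set rs"
    have RR: "fst ` set (rq # rs) = insert r R" by (simp add: rq R_def)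
    have finR: "finite R" unfolding R_def by simp
    define M' where "M' = insert r M"
    define pred' where "pred' = pred(r := bt)"
    have cardk: "card (M \<union> insert r R) \<le> k" using prems(11) unfolding RR .
    have cardM'R: "card (M' \<union> fst ` set rs) \<le> k"
    proof -
      have "M' \<union> R = M \<union> insert r R" by (auto simp: M'_def)
      then show ?thesis using cardk R_def by simp
    qed
    define n where "n = card (insert r R - M - P1 - P0)"
    define p where "p = card P1"
    define g where "g = card (P1 - insert r R)"
    define Z where "Z = real (card (P0 - insert r R)) * (harm (card P0) - harm (card (P0 - insert r R)))"
    have fX: "finite X" if "X \<subseteq> P1" for X using that prems(2) finite_subset by blast
    have miss: "F k (M \<union> P0 \<union> X, M, pred) (rq # rs) = 1 + (\<Sum>v\<in>X. F k (M' \<union> P0 \<union> (X - {v}), M', pred') rs) / real (card X)"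
      if X: "X \<subseteq> P1" "card X = a" "r \<notin> M \<union> P0 \<union> X" for X
    proof -
      have fin: "finite X" using fX X by blast
      have ne: "X \<noteq> {}" using X a0 by auto
      have dM: "M \<union> P0 \<union> X - M = P0 \<union> X" using X prems(4,5) by blast
      have np: "{q \<in> M \<union> P0 \<union> X - M. pred q} = X" using dM X prems(7,8) by auto
      have V: "X = (if {q \<in> M \<union> P0 \<union> X - M. pred q} \<noteq> {} then {q \<in> M \<union> P0 \<union> X - M. pred q} else M \<union> P0 \<union> X - M)"
        using np ne by simp
      have cMX: "card (M \<union> P0 \<union> X) = k"
      proof -
        have "card (M \<union> P0 \<union> X) = card (M \<union> P0) + card X"
          using X prems(1,3,4,6) fin by (subst card_Un_disjoint) auto
        also have "card (M \<union> P0) = card M + card P0" using prems(1,3,5) by (subst card_Un_disjoint) auto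
        finally show ?thesis using X prems(10) by simp
      qed
      have "F k (M \<union> P0 \<union> X, M, pred) ((r, bt) # rs) = 1 + (\<Sum>v\<in>X. F k (insert r (M \<union> P0 \<union> X - {v}), insert r M, pred(r := bt)) rs) / real (card X)"
      proof (rule F_miss[OF _ cMX _ V fin ne])
        show "r \<notin> M \<union> P0 \<union> X" using X by blast
        show "\<not> M \<union> P0 \<union> X \<subseteq> M" using ne dM by blast
      qed
      also have "(\<Sum>v\<in>X. F k (insert r (M \<union> P0 \<union> X - {v}), insert r M, pred(r := bt)) rs) = (\<Sum>v\<in>X. F k (M' \<union> P0 \<union> (X - {v}), M', pred') rs)"
      proof (rule sum.cong)
        fix v assume "v \<in> X"
        then have "insert r (M \<union> P0 \<union> X - {v}) = M' \<union> P0 \<union> (X - {v})" using X prems(4,6) by (auto simp: M'_def)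
        then show "F k (insert r (M \<union> P0 \<union> X - {v}), insert r M, pred(r := bt)) rs = F k (M' \<union> P0 \<union> (X - {v}), M', pred') rs"
          by (simp add: M'_def pred'_def)
      qed simp
      finally show ?thesis by (simp add: rq)
    qed
    define G where "G Y = F k (M' \<union> P0 \<union> Y, M', pred') rs" for Y
    let ?h = "\<lambda>X. F k (M \<union> P0 \<union> X, M, pred) (rq # rs)"
    have goal_eq: "?thesis = (avg (subs P1 a) ?h \<le> real n + real (n + (p - a)) * (harm p - harm g) + Z)"
      unfolding n_def p_def g_def Z_def R_def by (simp add: rq)
    have gp: "g \<le> p" unfolding g_def p_def using prems(2) by (intro card_mono) auto
    have main_goal: "avg (subs P1 a) ?h \<le> real n + real (n + (p - a)) * (harm p - harm g) + Z"
    proof (cases "r \<in> M")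
      case True
      have rP1: "r \<notin> P1" "r \<notin> P0" using True prems(4,5) by blast+
      have "avg (subs P1 a) ?h = avg (subs P1 a) (\<lambda>X. F k (M \<union> P0 \<union> X, M, pred') rs)"
        by (rule avg_cong) (simp add: rq F_hit True insert_absorb pred'_def)
      also have "\<dots> \<le> real (card (R - M - P1 - P0)) + real (card (R - M - P1 - P0) + (card P1 - a)) * (harm (card P1) - harm (card (P1 - R)))
       + real (card (P0 - R)) * (harm (card P0) - harm (card (P0 - R)))"
        unfolding R_def
      proof (rule Cons.IH)
        show "\<forall>q\<in>P1. pred' q" using prems(7) rP1 by (simp add: pred'_def)
        show "\<forall>q\<in>P0. \<not> pred' q" using prems(8) rP1 by (simp add: pred'_def)
        have "card (M \<union> R) \<le> card (M \<union> insert r R)" by (rule card_mono) (auto simp: prems(1) finR)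
        then show "card (M \<union> fst ` set rs) \<le> k" using cardk R_def by simp
      qed (use prems in auto)
      also have "R - M - P1 - P0 = insert r R - M - P1 - P0" using True by auto
      also have "P1 - R = P1 - insert r R" using rP1 by auto
      also have "P0 - R = P0 - insert r R" using rP1 by auto
      finally have "avg (subs P1 a) ?h \<le> real n + real (n + (p - a)) * (harm p - harm g) + Z"
        unfolding n_def p_def g_def Z_def by simp
      then show ?thesis .
    next
      case notM: False
      show ?thesis
      proof (cases "r \<in> P1")
        case inP: True
        have rP0: "r \<notin> P0" using inP prems(6) by blast
        define P' where "P' = P1 - {r}"
        have fP': "finite P'" using prems(2) P'_def by simp
        have cP': "card P' = p - 1" using inP prems(2) by (simp add: P'_def p_def)
        have p1: "p \<ge> 1"
        proof -
          have "p > 0" unfolding p_def using inP prems(2) card_gt_0_iff by blast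
          then show ?thesis by simp
        qed
        define A where "A = avg (subs P' (a-1)) G"
        have t1: "avg (subs P' (a-1)) (\<lambda>Y. ?h (insert r Y)) = A"
          unfolding A_def
        proof (rule avg_cong)
          fix Y assume "Y \<in> subs P' (a - 1)"
          have "M \<union> P0 \<union> insert r Y = M' \<union> P0 \<union> Y" by (auto simp: M'_def)
          then show "?h (insert r Y) = G Y" by (simp add: rq F_hit G_def M'_def pred'_def)
        qed
        have t2: "real (p - a) / real p * avg (subs P' a) ?h = real (p - a) / real p * (1 + A)"
        proof (cases "a < p")
          case True
          have ne: "subs P' a \<noteq> {}"
          proof -
            have "a \<le> card P'" using True cP' by simp
            then obtain X where "X \<subseteq> P'" "card X = a" by (rule obtain_subset_with_card_n)
            then show ?thesis by (auto simp: subs_def)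
          qed
          have "avg (subs P' a) ?h = avg (subs P' a) (\<lambda>X. 1 + (\<Sum>v\<in>X. G (X - {v})) / real (card X))"
          proof (rule avg_cong)
            fix X assume "X \<in> subs P' a"
            then have "X \<subseteq> P1" "card X = a" "r \<notin> M \<union> P0 \<union> X" using notM rP0 by (auto simp: subs_def P'_def)
            then show "?h X = 1 + (\<Sum>v\<in>X. G (X - {v})) / real (card X)" by (simp add: miss G_def)
          qed
          also have "\<dots> = 1 + avg (subs P' a) (\<lambda>X. (\<Sum>v\<in>X. G (X - {v})) / real (card X))"
            by (rule avg_add_const[OF finite_subs[OF fP'] ne])
          also have "\<dots> = 1 + A" unfolding A_def using a0 True cP' by (subst avg_evict[OF fP']) auto
          finally show ?thesis by simp
        next
          case False
          then show ?thesis using prems(9) p_def by simp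
        qed
        have "avg (subs P1 a) ?h = real a / real p * A + real (p - a) / real p * (1 + A)"
          using avg_split[OF prems(2) inP, of a ?h] a0 prems(9) t1 t2 by (simp add: p_def P'_def)
        also have "\<dots> = real (p - a) / real p + A"
        proof -
          have "real p > 0" using p1 by simp
          moreover have "real (p - a) = real p - real a" using prems(9) p_def by simp
          ultimately show ?thesis by (simp add: field_simps)
        qed
        finally have eqA: "avg (subs P1 a) ?h = real (p - a) / real p + A" .
        have IHA: "A \<le> real (card (R - M' - P' - P0)) + real (card (R - M' - P' - P0) + (card P' - (a - 1))) * (harm (card P') - harm (card (P' - R)))
           + real (card (P0 - R)) * (harm (card P0) - harm (card (P0 - R)))"
          unfolding A_def G_def R_def
        proof (rule Cons.IH)
          show "finite M'" using prems(1) M'_def by simp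
          show "finite P'" by (rule fP')
          show "M' \<inter> P' = {}" using prems(4) by (auto simp: M'_def P'_def)
          show "M' \<inter> P0 = {}" using prems(5) rP0 by (auto simp: M'_def)
          show "P' \<inter> P0 = {}" using prems(6) by (auto simp: P'_def)
          show "\<forall>q\<in>P'. pred' q" using prems(7) by (simp add: pred'_def P'_def)
          show "\<forall>q\<in>P0. \<not> pred' q" using prems(8) rP0 by (simp add: pred'_def)
          show "a - 1 \<le> card P'" using cP' prems(9) p_def by simp
          show "card M' + (a - 1) + card P0 = k" using prems(1,10) notM a0 M'_def by simp
          show "card (M' \<union> fst ` set rs) \<le> k" by (rule cardM'R)
        qed (use prems in auto)
        have s1: "R - M' - P' - P0 = insert r R - M - P1 - P0" using inP by (auto simp: M'_def P'_def)
        have s2: "P' - R = P1 - insert r R" using inP by (auto simp: P'_def)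
        have s3: "P0 - R = P0 - insert r R" using rP0 by auto
        have s4: "card P' - (a - 1) = p - a" using cP' a0 prems(9) p_def by simp
        have main: "avg (subs P1 a) ?h \<le> real (p - a) / real p + real n + real (n + (p - a)) * (harm (p - 1) - harm g) + Z"
          using eqA IHA unfolding s1 s2 s3 s4 unfolding cP' n_def g_def Z_def by simp
        have hp: "(harm p :: real) = harm (p - 1) + 1 / real p"
          using p1 harm_Suc_real[of "p - 1"] by simp
        have "real (p - a) / real p \<le> real (n + (p - a)) / real p" by (simp add: divide_right_mono)
        then have "real (p - a) / real p + real (n + (p - a)) * (harm (p - 1) - harm g) \<le> real (n + (p - a)) * (harm p - harm g)"
          by (simp add: hp algebra_simps)
        then show ?thesis using main by simp
      next
        case notP1: False
        show ?thesis
        proof (cases "r \<in> P0")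
          case inP0: True
          define P0' where "P0' = P0 - {r}"
          have "avg (subs P1 a) ?h = avg (subs P1 a) (\<lambda>X. F k (M' \<union> P0' \<union> X, M', pred') rs)"
          proof (rule avg_cong)
            fix X assume "X \<in> subs P1 a"
            have "M \<union> P0 \<union> X = M' \<union> P0' \<union> X" using inP0 by (auto simp: M'_def P0'_def)
            then show "?h X = F k (M' \<union> P0' \<union> X, M', pred') rs"
              using inP0 by (simp add: rq F_hit M'_def pred'_def)
          qed
          also have "\<dots> \<le> real (card (R - M' - P1 - P0')) + real (card (R - M' - P1 - P0') + (card P1 - a)) * (harm (card P1) - harm (card (P1 - R)))
             + real (card (P0' - R)) * (harm (card P0') - harm (card (P0' - R)))"
            unfolding R_def
          proof (rule Cons.IH)
            show "finite M'" using prems(1) M'_def by simp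
            show "finite P0'" using prems(3) P0'_def by simp
            show "M' \<inter> P1 = {}" using prems(4) notP1 by (auto simp: M'_def)
            show "M' \<inter> P0' = {}" using prems(5) by (auto simp: M'_def P0'_def)
            show "P1 \<inter> P0' = {}" using prems(6) by (auto simp: P0'_def)
            show "\<forall>q\<in>P1. pred' q" using prems(7) notP1 by (simp add: pred'_def)
            show "\<forall>q\<in>P0'. \<not> pred' q" using prems(8) by (simp add: pred'_def P0'_def)
            have "card P0 > 0" using inP0 prems(3) card_gt_0_iff by blast
            then show "card M' + a + card P0' = k" using prems(1,3,10) notM inP0 M'_def P0'_def by simp
            show "card (M' \<union> fst ` set rs) \<le> k" by (rule cardM'R)
          qed (use prems in auto)
          also have "R - M' - P1 - P0' = insert r R - M - P1 - P0" using inP0 by (auto simp: M'_def P0'_def)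
          also have "P1 - R = P1 - insert r R" using notP1 by auto
          also have "P0' - R = P0 - insert r R" by (auto simp: P0'_def)
          finally have main: "avg (subs P1 a) ?h \<le> real n + real (n + (p - a)) * (harm p - harm g)
             + real (card (P0 - insert r R)) * (harm (card P0') - harm (card (P0 - insert r R)))"
            unfolding n_def p_def g_def .
          have "real (card (P0 - insert r R)) * (harm (card P0') - harm (card (P0 - insert r R))) \<le> Z"
            unfolding Z_def
          proof (rule mult_left_mono)
            have "card P0' \<le> card P0" unfolding P0'_def using prems(3) by (intro card_mono) auto
            then show "(harm (card P0') :: real) - harm (card (P0 - insert r R)) \<le> harm (card P0) - harm (card (P0 - insert r R))"
              using harm_mono by simp
          qed simp
          then show ?thesis using main by simp
        next
          case notP0: False
          have ne: "subs P1 a \<noteq> {}"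
          proof -
            obtain X where "X \<subseteq> P1" "card X = a" using prems(9) by (rule obtain_subset_with_card_n)
            then show ?thesis by (auto simp: subs_def)
          qed
          have "avg (subs P1 a) ?h = avg (subs P1 a) (\<lambda>X. 1 + (\<Sum>v\<in>X. G (X - {v})) / real (card X))"
          proof (rule avg_cong)
            fix X assume "X \<in> subs P1 a"
            then have "X \<subseteq> P1" "card X = a" "r \<notin> M \<union> P0 \<union> X" using notM notP1 notP0 by (auto simp: subs_def)
            then show "?h X = 1 + (\<Sum>v\<in>X. G (X - {v})) / real (card X)" by (simp add: miss G_def)
          qed
          also have "\<dots> = 1 + avg (subs P1 a) (\<lambda>X. (\<Sum>v\<in>X. G (X - {v})) / real (card X))"
            by (rule avg_add_const[OF finite_subs[OF prems(2)] ne])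
          also have "\<dots> = 1 + avg (subs P1 (a - 1)) G" using a0 prems(9) by (subst avg_evict[OF prems(2)]) auto
          finally have eqA: "avg (subs P1 a) ?h = 1 + avg (subs P1 (a - 1)) G" .
          have IHA: "avg (subs P1 (a - 1)) G \<le> real (card (R - M' - P1 - P0)) + real (card (R - M' - P1 - P0) + (card P1 - (a - 1))) * (harm (card P1) - harm (card (P1 - R)))
             + real (card (P0 - R)) * (harm (card P0) - harm (card (P0 - R)))"
            unfolding G_def R_def
          proof (rule Cons.IH)
            show "finite M'" using prems(1) M'_def by simp
            show "M' \<inter> P1 = {}" using prems(4) notP1 by (auto simp: M'_def)
            show "M' \<inter> P0 = {}" using prems(5) notP0 by (auto simp: M'_def)
            show "\<forall>q\<in>P1. pred' q" using prems(7) notP1 by (simp add: pred'_def)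
            show "\<forall>q\<in>P0. \<not> pred' q" using prems(8) notP0 by (simp add: pred'_def)
            show "card M' + (a - 1) + card P0 = k" using prems(1,10) notM a0 M'_def by simp
            show "card (M' \<union> fst ` set rs) \<le> k" by (rule cardM'R)
          qed (use prems in auto)
          have cc: "card (R - M' - P1 - P0) + 1 = n"
          proof -
            have "insert r R - M - P1 - P0 = insert r (R - M' - P1 - P0)" using notM notP1 notP0 by (auto simp: M'_def)
            moreover have "r \<notin> R - M' - P1 - P0" by (simp add: M'_def)
            ultimately show ?thesis unfolding n_def using finR by simp
          qed
          have s2: "P1 - R = P1 - insert r R" using notP1 by auto
          have s3: "P0 - R = P0 - insert r R" using notP0 by auto
          have s4: "card (R - M' - P1 - P0) + (card P1 - (a - 1)) = n + (p - a)"
            using cc a0 prems(9) p_def by simp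
          have rn: "real (card (R - M' - P1 - P0)) = real n - 1" using cc by (metis add_diff_cancel_right' of_nat_add of_nat_1)
          show ?thesis using eqA IHA unfolding s2 s3 s4 rn by (simp add: n_def p_def g_def Z_def)
        qed
      qed
    qed
    then show ?thesis unfolding goal_eq .
  qed
qed

theorem lemma1:
  fixes k :: nat and C :: "'a set" and p0 :: "'a \<Rightarrow> bool" and rs :: "('a \<times> bool) list"
  assumes "k \<ge> 1"
    and "finite C" and "card C = k"
    and "rs \<noteq> []" and "fst (hd rs) \<notin> C"
    and "card (fst ` set rs) \<le> k"
  defines "c \<equiv> card (fst ` set rs - C)"
    and "\<eta>0 \<equiv> card {q \<in> C. \<not> p0 q \<and> q \<notin> fst ` set rs}"
    and "\<eta>1 \<equiv> card {q \<in> C. p0 q \<and> q \<in> fst ` set rs}"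
  shows "measure_pmf.expectation (mp_faults k (C, C, p0) rs) real
           \<le> real c * (harm (\<eta>1 + c) - harm c + 1) + harm k * real \<eta>0"
proof -
  obtain r bt rs' where rs: "rs = (r, bt) # rs'" using assms(4) by (cases rs) auto
  have rC: "r \<notin> C" using assms(5) rs by simp
  define R where "R = fst ` set rs'"
  have finR: "finite R" unfolding R_def by simp
  have RR: "fst ` set rs = insert r R" by (simp add: rs R_def)
  define P1 where "P1 = {q \<in> C. p0 q}"
  define P0 where "P0 = {q \<in> C. \<not> p0 q}"
  define pred' where "pred' = p0(r := bt)"
  define M where "M = {r}"
  have fP1: "finite P1" and fP0: "finite P0" using assms(2) by (auto simp: P1_def P0_def)
  have CP: "C = P1 \<union> P0" and dP: "P1 \<inter> P0 = {}" by (auto simp: P1_def P0_def)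
  have Cne: "C \<noteq> {}" using assms(1,3) by auto
  define V where "V = (if {q \<in> C. p0 q} \<noteq> {} then {q \<in> C. p0 q} else C)"
  have fV: "finite V" and Vne: "V \<noteq> {}" using assms(2) Cne by (auto simp: V_def)
  have F0: "F k (C, C, p0) rs = 1 + (\<Sum>v\<in>V. F k (insert r (C - {v}), {r}, pred') rs') / real (card V)"
    unfolding rs pred'_def by (rule F_reset[OF rC assms(3) _ V_def fV Vne]) simp
  define c' where "c' = card (R - M - C)"
  have c_eq: "c = c' + 1"
  proof -
    have "fst ` set rs - C = insert r (R - M - C)" using rC by (auto simp: RR M_def)
    moreover have "r \<notin> R - M - C" by (simp add: M_def)
    ultimately show ?thesis unfolding c_def c'_def using finR by simp
  qed
  have e0: "\<eta>0 = card (P0 - insert r R)" unfolding \<eta>0_def P0_def RR by (rule arg_cong[where f = card]) auto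
  have e1: "\<eta>1 = card (P1 \<inter> insert r R)" unfolding \<eta>1_def P1_def RR by (rule arg_cong[where f = card]) auto
  define B1 where "B1 = card (P1 - insert r R)"
  have p1eq: "card P1 = \<eta>1 + B1" unfolding e1 B1_def by (rule card_Int_Diff[OF fP1])
  have cB: "c \<le> B1 + \<eta>0"
  proof -
    have fRR: "finite (insert r R)" using finR by simp
    have "card (insert r R) = card (insert r R \<inter> C) + c"
      unfolding c_def RR by (rule card_Int_Diff[OF fRR])
    moreover have "card C = card (C \<inter> insert r R) + card (C - insert r R)" by (rule card_Int_Diff[OF assms(2)])
    moreover have "card (C - insert r R) = B1 + \<eta>0"
    proof -
      have "C - insert r R = (P1 - insert r R) \<union> (P0 - insert r R)" using CP by auto
      moreover have "(P1 - insert r R) \<inter> (P0 - insert r R) = {}" using dP by auto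
      ultimately show ?thesis unfolding B1_def e0 using fP1 fP0 by (simp add: card_Un_disjoint)
    qed
    moreover have "insert r R \<inter> C = C \<inter> insert r R" by auto
    ultimately show ?thesis using assms(3,6) RR by simp
  qed
  have cardMR: "card (M \<union> fst ` set rs') \<le> k"
  proof -
    have "M \<union> fst ` set rs' = fst ` set rs" by (auto simp: M_def RR R_def)
    then show ?thesis using assms(6) by simp
  qed
  have "card P0 \<le> card C" using assms(2) by (intro card_mono) (auto simp: P0_def)
  then have p0k: "card P0 \<le> k" using assms(3) by simp
  have e0p0: "\<eta>0 \<le> card P0" unfolding e0 using fP0 by (intro card_mono) auto
  have cardP: "card P1 + card P0 = k" using assms(3) CP dP fP1 fP0 by (simp add: card_Un_disjoint)
  have "F k (C, C, p0) rs \<le> real c * (harm (\<eta>1 + c) - harm c + 1) + harm k * real \<eta>0"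
  proof (cases "P1 = {}")
    case False
    have VP: "V = P1" using False unfolding V_def P1_def by simp
    have pos: "card P1 > 0" using False fP1 by (simp add: card_gt_0_iff)
    define G where "G X = F k (M \<union> P0 \<union> X, M, pred') rs'" for X
    have "(\<Sum>v\<in>V. F k (insert r (C - {v}), {r}, pred') rs') / real (card V)
        = (\<Sum>v\<in>P1. G (P1 - {v})) / real (card P1)"
    proof -
      have "(\<Sum>v\<in>P1. F k (insert r (C - {v}), {r}, pred') rs') = (\<Sum>v\<in>P1. G (P1 - {v}))"
      proof (rule sum.cong)
        fix v assume "v \<in> P1"
        then have "insert r (C - {v}) = M \<union> P0 \<union> (P1 - {v})" using CP dP by (auto simp: M_def)
        then show "F k (insert r (C - {v}), {r}, pred') rs' = G (P1 - {v})" by (simp add: G_def M_def)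
      qed simp
      then show ?thesis using VP by simp
    qed
    also have "\<dots> = avg (subs P1 (card P1)) (\<lambda>X. (\<Sum>v\<in>X. G (X - {v})) / real (card X))"
      by (simp add: subs_full fP1 avg_single)
    also have "\<dots> = avg (subs P1 (card P1 - 1)) G"
      using pos by (subst avg_evict[OF fP1]) auto
    also have "\<dots> \<le> real (card (R - M - P1 - P0)) + real (card (R - M - P1 - P0) + (card P1 - (card P1 - 1))) * (harm (card P1) - harm (card (P1 - R)))
       + real (card (P0 - R)) * (harm (card P0) - harm (card (P0 - R)))"
      unfolding G_def R_def
    proof (rule reg1)
      show "finite M" by (simp add: M_def)
      show "M \<inter> P1 = {}" "M \<inter> P0 = {}" using rC by (auto simp: M_def P1_def P0_def)
      show "P1 \<inter> P0 = {}" by (rule dP)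
      show "\<forall>q\<in>P1. pred' q" using rC by (auto simp: pred'_def P1_def)
      show "\<forall>q\<in>P0. \<not> pred' q" using rC by (auto simp: pred'_def P0_def)
      show "card M + (card P1 - 1) + card P0 = k" using pos cardP by (simp add: M_def)
      show "card (M \<union> fst ` set rs') \<le> k" by (rule cardMR)
    qed (use fP1 fP0 in auto)
    also have "R - M - P1 - P0 = R - M - C" using CP by auto
    also have "P1 - R = P1 - insert r R" using rC by (auto simp: P1_def)
    also have "P0 - R = P0 - insert r R" using rC by (auto simp: P0_def)
    finally have bnd: "(\<Sum>v\<in>V. F k (insert r (C - {v}), {r}, pred') rs') / real (card V)
        \<le> real c' + real (c' + 1) * (harm (card P1) - harm B1) + real \<eta>0 * (harm (card P0) - harm \<eta>0)"
      using pos unfolding c'_def B1_def e0 by simp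
    have "F k (C, C, p0) rs \<le> real c + real c * (harm (\<eta>1 + B1) - harm B1) + real \<eta>0 * (harm (card P0) - harm \<eta>0)"
      using F0 bnd c_eq p1eq by simp
    also have "\<dots> \<le> real c * (harm (\<eta>1 + c) - harm c + 1) + harm k * real \<eta>0"
      by (rule final_ineq[OF cB p0k e0p0])
    finally show ?thesis .
  next
    case True
    have VC: "V = C" using True unfolding V_def P1_def by simp
    have P0C: "P0 = C" using True CP by simp
    define G where "G X = F k (M \<union> X, M, pred') rs'" for X
    have "(\<Sum>v\<in>V. F k (insert r (C - {v}), {r}, pred') rs') / real (card V)
        = (\<Sum>v\<in>C. G (C - {v})) / real (card C)"
    proof -
      have "(\<Sum>v\<in>C. F k (insert r (C - {v}), {r}, pred') rs') = (\<Sum>v\<in>C. G (C - {v}))"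
        by (rule sum.cong) (auto simp: G_def M_def)
      then show ?thesis using VC by simp
    qed
    also have "\<dots> = avg (subs C (card C)) (\<lambda>X. (\<Sum>v\<in>X. G (X - {v})) / real (card X))"
      by (simp add: subs_full assms(2) avg_single)
    also have "\<dots> = avg (subs C (card C - 1)) G"
      using assms(1,3) by (subst avg_evict[OF assms(2)]) auto
    also have "\<dots> \<le> real (card (R - M - C)) + real (card (C - R)) * (harm (card C) - harm (card (C - R)))"
      unfolding G_def R_def
    proof (rule reg0)
      show "finite M" by (simp add: M_def)
      show "M \<inter> C = {}" using rC by (auto simp: M_def)
      show "\<forall>q\<in>C. \<not> pred' q" using rC True by (auto simp: pred'_def P1_def)
      show "card M + (card C - 1) = k" using assms(1,3) by (simp add: M_def)
      show "card (M \<union> fst ` set rs') \<le> k" by (rule cardMR)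
    qed (use assms in auto)
    also have "C - R = P0 - insert r R" using rC P0C by auto
    finally have bnd: "(\<Sum>v\<in>V. F k (insert r (C - {v}), {r}, pred') rs') / real (card V)
        \<le> real c' + real \<eta>0 * (harm k - harm \<eta>0)"
      unfolding c'_def e0 using assms(3) by simp
    have h1: "0 \<le> real c * (harm (\<eta>1 + c) - harm c :: real)"
      by (intro mult_nonneg_nonneg) (auto simp: harm_mono)
    have h2: "0 \<le> real \<eta>0 * (harm \<eta>0 :: real)" by (simp add: harm_nonneg)
    have "F k (C, C, p0) rs \<le> real c + real \<eta>0 * (harm k - harm \<eta>0)"
      using F0 bnd c_eq by simp
    also have "\<dots> \<le> real c * (harm (\<eta>1 + c) - harm c + 1) + harm k * real \<eta>0"
      using h1 h2 by (simp add: algebra_simps)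
    finally show ?thesis .
  qed
  then show ?thesis unfolding F_def .
qed

thm_deps lemma1

end
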